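(* Let $K$ be a nonempty finite set and $X=\Delta(K)$. If $f,g\in D_0$ and $\lambda\in[0,1]$, then each of the following belongs to $D_0$: - $-f$, - $\max\{f,g\}$, - $\min\{f,g\}$, - $\lambda f+(1-\lambda)g$. Moreover, the linear span of $D_0$ is dense in $\mathcal C(X)$ for the uniform norm.
   Context: $X=\Delta(K)=\{p\in\mathbb R_+^K:\sum_k p^k=1\}$. $D_0$ ("non revealing functions") is the set of functions $f:X\to\mathbb R$ of the following form. There exist: - nonempty finite sets $I,J$, and - matrices $(G^k)_{k\in K}$ in $[-1,1]^{I\times J}$, such that for all $p\in X$, $f(p)=\mathrm{Val}\big(\sum_{k\in K}p^kG^k\big)$. Here $\mathrm{Val}(M)=\max_{x\in\Delta(I)}\min_{y\in\Delta(J)}\sum_{i,j}x(i)y(j)M(i,j)$ is the value of the zero-sum matrix game $M$. *)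

theory Defs
  imports "HOL-Analysis.Analysis"
begin

text \<open>The simplex Delta(K) of probability vectors on the finite index type 'k
  (the index set K is the (nonempty, finite) universe of the type 'k).\<close>
definition simplexK :: "(real ^ 'k::finite) set" where
  "simplexK = {p. (\<forall>k. 0 \<le> p $ k) \<and> (\<Sum>k\<in>UNIV. p $ k) = 1}"

definition mixed :: "nat set \<Rightarrow> (nat \<Rightarrow> real) set" where
  "mixed I = {x. (\<forall>i\<in>I. 0 \<le> x i) \<and> (\<forall>i. i \<notin> I \<longrightarrow> x i = 0) \<and> (\<Sum>i\<in>I. x i) = 1}"

text \<open>Value of the zero-sum matrix game M with row set I and column set J
  (max-min; the max and min are attained, so Sup/Inf coincide with them).\<close>
definition Val :: "nat set \<Rightarrow> nat set \<Rightarrow> (nat \<Rightarrow> nat \<Rightarrow> real) \<Rightarrow> real" where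
  "Val I J M = (SUP x\<in>mixed I. INF y\<in>mixed J. \<Sum>i\<in>I. \<Sum>j\<in>J. x i * y j * M i j)"

text \<open>Non revealing functions D_0 (functions are compared on the simplex only).\<close>
definition D0 :: "(real ^ 'k::finite \<Rightarrow> real) set" where
  "D0 = {f. \<exists>(I::nat set) (J::nat set) (G::'k \<Rightarrow> nat \<Rightarrow> nat \<Rightarrow> real).
            finite I \<and> I \<noteq> {} \<and> finite J \<and> J \<noteq> {} \<and>
            (\<forall>k i j. \<bar>G k i j\<bar> \<le> 1) \<and>
            (\<forall>p\<in>simplexK. f p = Val I J (\<lambda>i j. \<Sum>k\<in>UNIV. p $ k * G k i j))}"

definition lin_span :: "('a \<Rightarrow> real) set \<Rightarrow> ('a \<Rightarrow> real) set" where
  "lin_span S = {h. \<exists>(n::nat) (c::nat \<Rightarrow> real) (fs::nat \<Rightarrow> 'a \<Rightarrow> real).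
                    (\<forall>i<n. fs i \<in> S) \<and> h = (\<lambda>p. \<Sum>i<n. c i * fs i p)}"

end

theory Submission
  imports Defs "HOL-Library.Nat_Bijection"
begin

definition rowv :: "nat set \<Rightarrow> nat set \<Rightarrow> (nat \<Rightarrow> nat \<Rightarrow> real) \<Rightarrow> (nat \<Rightarrow> real) \<Rightarrow> real" where
  "rowv I J M x = Min ((\<lambda>j. \<Sum>i\<in>I. x i * M i j) ` J)"

definition colv :: "nat set \<Rightarrow> nat set \<Rightarrow> (nat \<Rightarrow> nat \<Rightarrow> real) \<Rightarrow> (nat \<Rightarrow> real) \<Rightarrow> real" where
  "colv I J M y = Max ((\<lambda>i. \<Sum>j\<in>J. y j * M i j) ` I)"

lemma mixed_nonneg: "x \<in> mixed I \<Longrightarrow> i \<in> I \<Longrightarrow> 0 \<le> x i"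
  by (auto simp: mixed_def)
lemma mixed_sum: "x \<in> mixed I \<Longrightarrow> (\<Sum>i\<in>I. x i) = 1"
  by (auto simp: mixed_def)
lemma mixed_out: "x \<in> mixed I \<Longrightarrow> i \<notin> I \<Longrightarrow> x i = 0"
  by (auto simp: mixed_def)

lemma ind_mixed: "finite I \<Longrightarrow> i0 \<in> I \<Longrightarrow> (\<lambda>i. if i = i0 then 1 else 0) \<in> mixed I"
  by (auto simp: mixed_def)

lemma mixed_ne: "finite I \<Longrightarrow> I \<noteq> {} \<Longrightarrow> mixed I \<noteq> {}"
  using ind_mixed by blast

lemma convex_bound:
  assumes "x \<in> mixed I" "finite I" "\<And>i. i \<in> I \<Longrightarrow> \<bar>c i\<bar> \<le> B"
  shows "\<bar>\<Sum>i\<in>I. x i * c i\<bar> \<le> B"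
proof -
  have "\<bar>\<Sum>i\<in>I. x i * c i\<bar> \<le> (\<Sum>i\<in>I. \<bar>x i * c i\<bar>)" by (rule sum_abs)
  also have "\<dots> \<le> (\<Sum>i\<in>I. x i * B)"
    by (rule sum_mono) (use assms mixed_nonneg in \<open>auto simp: abs_mult intro: mult_left_mono\<close>)
  also have "\<dots> = B" using mixed_sum[OF assms(1)] by (simp add: sum_distrib_right[symmetric])
  finally show ?thesis .
qed

lemma convex_ge_Min:
  assumes "x \<in> mixed I" "finite I" "I \<noteq> {}"
  shows "Min (c ` I) \<le> (\<Sum>i\<in>I. x i * c i)"
proof -
  have "(\<Sum>i\<in>I. x i * Min (c ` I)) \<le> (\<Sum>i\<in>I. x i * c i)"
    by (rule sum_mono) (use assms mixed_nonneg in \<open>auto intro: mult_left_mono\<close>)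
  moreover have "(\<Sum>i\<in>I. x i * Min (c ` I)) = Min (c ` I)"
    using mixed_sum[OF assms(1)] by (simp add: sum_distrib_right[symmetric])
  ultimately show ?thesis by simp
qed

lemma convex_le_Max:
  assumes "x \<in> mixed I" "finite I" "I \<noteq> {}"
  shows "(\<Sum>i\<in>I. x i * c i) \<le> Max (c ` I)"
proof -
  have "(\<Sum>i\<in>I. x i * c i) \<le> (\<Sum>i\<in>I. x i * Max (c ` I))"
    by (rule sum_mono) (use assms mixed_nonneg in \<open>auto intro: mult_left_mono\<close>)
  moreover have "(\<Sum>i\<in>I. x i * Max (c ` I)) = Max (c ` I)"
    using mixed_sum[OF assms(1)] by (simp add: sum_distrib_right[symmetric])
  ultimately show ?thesis by simp
qed

lemma ind_sum: "(\<Sum>i\<in>I. (if i = i0 then 1 else 0) * c i) = (c i0 :: real)" if "finite I" "i0 \<in> I"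
proof -
  have "(\<Sum>i\<in>I. (if i = i0 then 1 else 0) * c i) = (\<Sum>i\<in>I. if i = i0 then c i else 0)"
    by (rule sum.cong) auto
  also have "\<dots> = c i0" using that by simp
  finally show ?thesis .
qed

lemma INF_lin:
  assumes "finite J" "J \<noteq> {}"
  shows "(INF y\<in>mixed J. \<Sum>j\<in>J. y j * c j) = Min (c ` J)"
proof (rule antisym)
  obtain j0 where j0: "j0 \<in> J" "c j0 = Min (c ` J)" using Min_in[of "c ` J"] assms by (metis (no_types, lifting) finite_imageI image_iff image_is_empty)
  have bdd: "bdd_below ((\<lambda>y. \<Sum>j\<in>J. y j * c j) ` mixed J)"
    by (rule bdd_belowI2[where m="Min (c ` J)"]) (use convex_ge_Min assms in blast)
  show "(INF y\<in>mixed J. \<Sum>j\<in>J. y j * c j) \<le> Min (c ` J)"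
    by (rule cINF_lower2[OF bdd ind_mixed[OF assms(1) j0(1)]]) (simp add: ind_sum assms j0)
  show "Min (c ` J) \<le> (INF y\<in>mixed J. \<Sum>j\<in>J. y j * c j)"
    by (rule cINF_greatest) (use convex_ge_Min assms mixed_ne in auto)
qed

lemma SUP_lin:
  assumes "finite J" "J \<noteq> {}"
  shows "(SUP y\<in>mixed J. \<Sum>j\<in>J. y j * c j) = Max (c ` J)"
proof (rule antisym)
  obtain j0 where j0: "j0 \<in> J" "c j0 = Max (c ` J)" using Max_in[of "c ` J"] assms by (metis (no_types, lifting) finite_imageI image_iff image_is_empty)
  have bdd: "bdd_above ((\<lambda>y. \<Sum>j\<in>J. y j * c j) ` mixed J)"
    by (rule bdd_aboveI2[where M="Max (c ` J)"]) (use convex_le_Max assms in blast)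
  show "Max (c ` J) \<le> (SUP y\<in>mixed J. \<Sum>j\<in>J. y j * c j)"
    by (rule cSUP_upper2[OF bdd ind_mixed[OF assms(1) j0(1)]]) (simp add: ind_sum assms j0)
  show "(SUP y\<in>mixed J. \<Sum>j\<in>J. y j * c j) \<le> Max (c ` J)"
    by (rule cSUP_least) (use convex_le_Max assms mixed_ne in auto)
qed

lemma pay_rows: "(\<Sum>i\<in>I. \<Sum>j\<in>J. x i * y j * M i j) = (\<Sum>i\<in>I. x i * (\<Sum>j\<in>J. y j * M i j)::real)"
  by (simp add: sum_distrib_left mult.assoc mult.left_commute)

lemma pay_cols: "(\<Sum>i\<in>I. \<Sum>j\<in>J. x i * y j * M i j) = (\<Sum>j\<in>J. y j * (\<Sum>i\<in>I. x i * M i j)::real)"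
proof -
  have "(\<Sum>i\<in>I. \<Sum>j\<in>J. x i * y j * M i j) = (\<Sum>j\<in>J. \<Sum>i\<in>I. x i * y j * M i j)"
    by (rule sum.swap)
  also have "\<dots> = (\<Sum>j\<in>J. y j * (\<Sum>i\<in>I. x i * M i j))"
    by (simp add: sum_distrib_left mult.assoc mult.left_commute)
  finally show ?thesis .
qed

lemma Val_rowv:
  assumes "finite J" "J \<noteq> {}"
  shows "Val I J M = (SUP x\<in>mixed I. rowv I J M x)"
  unfolding Val_def
proof (rule SUP_cong[OF refl])
  fix x assume "x \<in> mixed I"
  show "(INF y\<in>mixed J. \<Sum>i\<in>I. \<Sum>j\<in>J. x i * y j * M i j) = rowv I J M x"
    unfolding pay_cols rowv_def by (rule INF_lin[OF assms])
qed

lemma rowv_le_colv: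
  assumes "finite I" "I \<noteq> {}" "finite J" "J \<noteq> {}" "x \<in> mixed I" "y \<in> mixed J"
  shows "rowv I J M x \<le> colv I J M y"
proof -
  have "rowv I J M x \<le> (\<Sum>j\<in>J. y j * (\<Sum>i\<in>I. x i * M i j))"
    unfolding rowv_def by (rule convex_ge_Min) (use assms in auto)
  also have "\<dots> = (\<Sum>i\<in>I. x i * (\<Sum>j\<in>J. y j * M i j))"
    using pay_cols pay_rows by metis
  also have "\<dots> \<le> colv I J M y"
    unfolding colv_def by (rule convex_le_Max) (use assms in auto)
  finally show ?thesis .
qed

lemma bdd_rowv:
  assumes "finite I" "I \<noteq> {}" "finite J" "J \<noteq> {}"
  shows "bdd_above (rowv I J M ` mixed I)"
proof -
  obtain y where "y \<in> mixed J" using mixed_ne assms by blast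
  then show ?thesis using rowv_le_colv assms by (intro bdd_aboveI2) blast
qed

lemma bdd_colv:
  assumes "finite I" "I \<noteq> {}" "finite J" "J \<noteq> {}"
  shows "bdd_below (colv I J M ` mixed J)"
proof -
  obtain x where "x \<in> mixed I" using mixed_ne assms by blast
  then show ?thesis using rowv_le_colv assms by (intro bdd_belowI2) blast
qed


lemma sq_pos_ineq: "(max 0 (a + h))^2 \<le> (max 0 a)^2 + 2 * max 0 a * h + h^2" for a h :: real
proof (cases "a \<le> 0")
  case True
  then show ?thesis
  proof (cases "a + h \<le> 0")
    case False
    then have "0 < a + h" "a + h \<le> h" using True by auto
    then have "(a+h)^2 \<le> h^2" by (intro power_mono) auto
    then show ?thesis using True False by simp
  qed (use True in auto)
next
  case False
  have "(max 0 (a+h))^2 \<le> (a+h)^2" by (cases "a+h \<le> 0") auto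
  then show ?thesis using False by (simp add: power2_sum)
qed

lemma hard:
  fixes M :: "nat \<Rightarrow> nat \<Rightarrow> real"
  assumes I: "finite I" "I \<noteq> {}" and J: "finite J" "J \<noteq> {}"
    and Bd: "\<And>i j. i \<in> I \<Longrightarrow> j \<in> J \<Longrightarrow> \<bar>M i j\<bar> \<le> B"
    and c: "c < (INF y\<in>mixed J. colv I J M y)"
  shows "\<exists>x\<in>mixed I. \<forall>j\<in>J. c < (\<Sum>i\<in>I. x i * M i j)"
proof -
  define v where "v = (INF y\<in>mixed J. colv I J M y)"
  define Mv where "Mv y i = (\<Sum>j\<in>J. y j * M i j)" for y i
  define F where "F y = (\<Sum>i\<in>I. (max 0 (Mv y i - c))^2)" for y
  define \<delta> where "\<delta> = (v - c)^2"
  have vc: "c < v" using c v_def by simp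
  have dpos: "0 < \<delta>" using vc \<delta>_def by simp
  have B0: "0 \<le> B" using Bd I J by (meson abs_ge_zero all_not_in_conv order.trans)
  have Fge: "\<delta> \<le> F y" if y: "y \<in> mixed J" for y
  proof -
    have "v \<le> colv I J M y" unfolding v_def by (rule cINF_lower[OF bdd_colv[OF I J] y])
    moreover have "colv I J M y \<in> (\<lambda>i. Mv y i) ` I" unfolding colv_def Mv_def
      by (rule Max_in) (use I in auto)
    ultimately obtain i where i: "i \<in> I" "v \<le> Mv y i" by auto
    have "\<delta> \<le> (max 0 (Mv y i - c))^2" unfolding \<delta>_def
      by (rule power_mono) (use i vc in auto)
    also have "\<dots> \<le> F y" unfolding F_def
      by (rule member_le_sum) (use i I in auto)
    finally show ?thesis .
  qed
  have bddF: "bdd_below (F ` mixed J)"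
    by (rule bdd_belowI2[where m=0]) (auto simp: F_def intro: sum_nonneg)
  define C where "C = 4 * B^2 * real (card I)"
  have C0: "0 \<le> C" unfolding C_def by simp
  define t where "t = min 1 (\<delta> / (1 + C))"
  have t0: "0 < t" using dpos C0 unfolding t_def by simp
  have t1: "t \<le> 1" unfolding t_def by simp
  have tC: "t * (1 + C) \<le> \<delta>" using C0 unfolding t_def
    by (smt (verit, best) divide_nonneg_nonneg dpos min.cobounded2 nonzero_eq_divide_eq pos_le_divide_eq)
  define m where "m = (INF y\<in>mixed J. F y)"
  have "m < m + t^2" using t0 by simp
  then obtain y0 where y0: "y0 \<in> mixed J" "F y0 < m + t^2"
    unfolding m_def using cINF_less_iff[OF mixed_ne[OF J] bddF] by (metis m_def)
  define w where "w i = max 0 (Mv y0 i - c)" for i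
  define W where "W = (\<Sum>i\<in>I. w i)"
  have w0: "0 \<le> w i" for i unfolding w_def by simp
  have Fy0: "F y0 = (\<Sum>i\<in>I. (w i)^2)" unfolding F_def w_def by simp
  have wMv: "(\<Sum>i\<in>I. w i * Mv y0 i) = F y0 + c * W"
    unfolding Fy0 W_def sum_distrib_left sum.distrib[symmetric]
    by (rule sum.cong) (auto simp: w_def power2_eq_square algebra_simps max_def)
  have dF: "\<delta> \<le> F y0" using Fge y0 by simp
  have Wpos: "0 < W"
  proof (rule ccontr)
    assume "\<not> 0 < W"
    then have "W = 0" using w0 unfolding W_def by (meson sum_nonneg not_less order.antisym)
    then have "\<forall>i\<in>I. w i = 0" unfolding W_def using w0 I by (simp add: sum_nonneg_eq_0_iff)
    then have "F y0 = 0" unfolding Fy0 by simp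
    then show False using dF dpos by simp
  qed
  have bMv: "\<bar>Mv y i\<bar> \<le> B" if "y \<in> mixed J" "i \<in> I" for y i
    unfolding Mv_def by (rule convex_bound) (use that J Bd in auto)
  have key: "c * W < (\<Sum>i\<in>I. w i * M i j)" if j: "j \<in> J" for j
  proof -
    define yt where "yt j' = (1 - t) * y0 j' + t * (if j' = j then 1 else 0)" for j'
    have yt: "yt \<in> mixed J"
    proof -
      have "\<forall>i\<in>J. 0 \<le> yt i" using y0 t0 t1 mixed_nonneg unfolding yt_def by fastforce
      moreover have "\<forall>i. i \<notin> J \<longrightarrow> yt i = 0" using y0 j mixed_out unfolding yt_def by fastforce
      moreover have "(\<Sum>i\<in>J. yt i) = 1"
        unfolding yt_def sum.distrib sum_distrib_left[symmetric] using mixed_sum[OF y0(1)] j J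
        by simp
      ultimately show ?thesis unfolding mixed_def by blast
    qed
    define d where "d i = M i j - Mv y0 i" for i
    have Mvt: "Mv yt i - c = (Mv y0 i - c) + t * d i" for i
    proof -
      have "Mv yt i = (\<Sum>j'\<in>J. (1-t)*(y0 j' * M i j')) + (\<Sum>j'\<in>J. t * ((if j'=j then 1 else 0) * M i j'))"
        unfolding Mv_def yt_def sum.distrib[symmetric] by (rule sum.cong) (auto simp: algebra_simps)
      also have "\<dots> = (1 - t) * Mv y0 i + t * M i j"
        unfolding Mv_def sum_distrib_left[symmetric] ind_sum[OF J(1) j] by simp
      finally have "Mv yt i = (1 - t) * Mv y0 i + t * M i j" .
      then show ?thesis unfolding d_def by (simp add: algebra_simps)
    qed
    have dB: "(d i)^2 \<le> 4 * B^2" if "i \<in> I" for i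
    proof -
      have "\<bar>d i\<bar> \<le> 2 * B" unfolding d_def using Bd[OF that j] bMv[OF y0(1) that] by linarith
      then have "(d i)^2 \<le> (2*B)^2" by (metis abs_ge_zero power2_abs power_mono)
      then show ?thesis by (simp add: power_mult_distrib)
    qed
    define S where "S = (\<Sum>i\<in>I. w i * d i)"
    have "m \<le> F yt" unfolding m_def by (rule cINF_lower[OF bddF yt])
    also have "F yt \<le> (\<Sum>i\<in>I. (w i)^2 + 2 * w i * (t * d i) + (t * d i)^2)"
      unfolding F_def Mvt w_def by (rule sum_mono) (rule sq_pos_ineq)
    also have "\<dots> = F y0 + 2 * t * S + t^2 * (\<Sum>i\<in>I. (d i)^2)"
      unfolding Fy0 S_def sum.distrib sum_distrib_left
      by (simp add: algebra_simps power2_eq_square)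
    also have "\<dots> \<le> F y0 + 2 * t * S + t^2 * C"
    proof -
      have "(\<Sum>i\<in>I. (d i)^2) \<le> (\<Sum>i\<in>I. 4 * B^2)" by (rule sum_mono) (use dB in auto)
      then have "(\<Sum>i\<in>I. (d i)^2) \<le> C" unfolding C_def by (simp add: mult_ac)
      then show ?thesis by (simp add: mult_left_mono)
    qed
    finally have "m \<le> F y0 + 2 * t * S + t^2 * C" .
    with y0(2) have "0 < t * (2 * S + t * (1 + C))" by (simp add: algebra_simps power2_eq_square)
    then have "0 < 2 * S + t * (1 + C)" using t0 by (simp add: zero_less_mult_iff)
    then have S: "- \<delta> / 2 < S" using tC by linarith
    have "S = (\<Sum>i\<in>I. w i * M i j) - (\<Sum>i\<in>I. w i * Mv y0 i)"
      unfolding S_def d_def by (simp add: algebra_simps sum_subtractf)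
    then show ?thesis using S wMv dF dpos by linarith
  qed
  define x where "x i = (if i \<in> I then w i / W else 0)" for i
  have "x \<in> mixed I"
    unfolding mixed_def x_def using w0 Wpos by (auto simp: sum_divide_distrib[symmetric] W_def)
  moreover have "\<forall>j\<in>J. c < (\<Sum>i\<in>I. x i * M i j)"
  proof
    fix j assume j: "j \<in> J"
    have "(\<Sum>i\<in>I. x i * M i j) = (\<Sum>i\<in>I. w i * M i j) / W"
      unfolding x_def sum_divide_distrib by (rule sum.cong) auto
    then show "c < (\<Sum>i\<in>I. x i * M i j)" using key[OF j] Wpos by (simp add: pos_less_divide_eq)
  qed
  ultimately show ?thesis by blast
qed


lemma Val_colv:
  fixes M :: "nat \<Rightarrow> nat \<Rightarrow> real"
  assumes I: "finite I" "I \<noteq> {}" and J: "finite J" "J \<noteq> {}"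
    and Bd: "\<And>i j. i \<in> I \<Longrightarrow> j \<in> J \<Longrightarrow> \<bar>M i j\<bar> \<le> B"
  shows "Val I J M = (INF y\<in>mixed J. colv I J M y)"
proof -
  let ?L = "SUP x\<in>mixed I. rowv I J M x" and ?U = "INF y\<in>mixed J. colv I J M y"
  have LU: "?L \<le> ?U"
    by (rule cSUP_least[OF mixed_ne[OF I]], rule cINF_greatest[OF mixed_ne[OF J]])
       (rule rowv_le_colv[OF I J])
  have "?U \<le> ?L"
  proof (rule ccontr)
    assume "\<not> ?U \<le> ?L"
    then have "?L < ?U" by simp
    then obtain x where x: "x \<in> mixed I" "\<forall>j\<in>J. ?L < (\<Sum>i\<in>I. x i * M i j)"
      using hard[where M=M and B=B and c="?L", OF I J Bd] by blast
    have "?L < rowv I J M x"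
      unfolding rowv_def[of I J M x] using x J by (subst Min_gr_iff) auto
    moreover have "rowv I J M x \<le> ?L" by (rule cSUP_upper[OF x(1) bdd_rowv[OF I J]])
    ultimately show False by simp
  qed
  with LU show ?thesis using Val_rowv[OF J] by simp
qed

lemma Min_neg:
  fixes g :: "nat \<Rightarrow> real"
  assumes "finite A" "A \<noteq> {}"
  shows "Min ((\<lambda>i. - g i) ` A) = - Max (g ` A)"
proof -
  have "Max (g ` A) \<in> g ` A" using assms by (intro Max_in) auto
  then obtain i0 where i0: "i0 \<in> A" "g i0 = Max (g ` A)" by auto
  show ?thesis
  proof (rule antisym)
    show "Min ((\<lambda>i. - g i) ` A) \<le> - Max (g ` A)"
      using i0 assms by (metis Min_le finite_imageI imageI)
    show "- Max (g ` A) \<le> Min ((\<lambda>i. - g i) ` A)"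
      using assms by (subst Min_ge_iff) auto
  qed
qed

lemma SUP_neg:
  fixes f :: "'a \<Rightarrow> real"
  assumes "A \<noteq> {}" "bdd_below (f ` A)"
  shows "(SUP x\<in>A. - f x) = - (INF x\<in>A. f x)"
proof (rule antisym)
  show "(SUP x\<in>A. - f x) \<le> - (INF x\<in>A. f x)"
    by (rule cSUP_least[OF assms(1)]) (simp add: cINF_lower[OF assms(2)])
  have bdd: "bdd_above ((\<lambda>x. - f x) ` A)"
  proof -
    obtain m where m: "\<And>x. x \<in> A \<Longrightarrow> m \<le> f x" using assms(2) by (auto simp: bdd_below_def)
    show ?thesis by (rule bdd_aboveI2[where M="- m"]) (use m in force)
  qed
  have "- (SUP x\<in>A. - f x) \<le> (INF x\<in>A. f x)"
  proof (rule cINF_greatest[OF assms(1)])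
    fix x assume "x \<in> A"
    have "- f x \<le> (SUP x\<in>A. - f x)" by (rule cSUP_upper[OF \<open>x \<in> A\<close> bdd])
    then show "- (SUP x\<in>A. - f x) \<le> f x" by simp
  qed
  then show "- (INF x\<in>A. f x) \<le> (SUP x\<in>A. - f x)" by simp
qed

lemma Val_neg:
  fixes M :: "nat \<Rightarrow> nat \<Rightarrow> real"
  assumes I: "finite I" "I \<noteq> {}" and J: "finite J" "J \<noteq> {}"
    and Bd: "\<And>i j. i \<in> I \<Longrightarrow> j \<in> J \<Longrightarrow> \<bar>M i j\<bar> \<le> B"
  shows "Val J I (\<lambda>j i. - M i j) = - Val I J M"
proof -
  have "Val J I (\<lambda>j i. - M i j) = (SUP y\<in>mixed J. rowv J I (\<lambda>j i. - M i j) y)"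
    by (rule Val_rowv[OF I])
  also have "\<dots> = (SUP y\<in>mixed J. - colv I J M y)"
  proof (rule SUP_cong[OF refl])
    fix y
    have "rowv J I (\<lambda>j i. - M i j) y = Min ((\<lambda>i. - (\<Sum>j\<in>J. y j * M i j)) ` I)"
      unfolding rowv_def by (simp add: sum_negf)
    then show "rowv J I (\<lambda>j i. - M i j) y = - colv I J M y"
      unfolding colv_def using Min_neg[OF I] by simp
  qed
  also have "\<dots> = - (INF y\<in>mixed J. colv I J M y)"
    by (rule SUP_neg[OF mixed_ne[OF J] bdd_colv[OF I J]])
  also have "\<dots> = - Val I J M" using Val_colv[OF I J Bd] by simp
  finally show ?thesis .
qed


definition evI :: "nat set \<Rightarrow> nat set \<Rightarrow> nat set" where
  "evI I I2 = (\<lambda>i. 2*i) ` I \<union> (\<lambda>i. 2*i+1) ` I2"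
definition pr :: "nat set \<Rightarrow> nat set \<Rightarrow> nat set" where
  "pr A B = prod_encode ` (A \<times> B)"
definition maxM :: "(nat \<Rightarrow> nat \<Rightarrow> real) \<Rightarrow> (nat \<Rightarrow> nat \<Rightarrow> real) \<Rightarrow> nat \<Rightarrow> nat \<Rightarrow> real" where
  "maxM M N a b = (if even a then M (a div 2) (fst (prod_decode b)) else N (a div 2) (snd (prod_decode b)))"
definition cvxM :: "real \<Rightarrow> (nat \<Rightarrow> nat \<Rightarrow> real) \<Rightarrow> (nat \<Rightarrow> nat \<Rightarrow> real) \<Rightarrow> nat \<Rightarrow> nat \<Rightarrow> real" where
  "cvxM lam M N a b = lam * M (fst (prod_decode a)) (fst (prod_decode b))
     + (1 - lam) * N (snd (prod_decode a)) (snd (prod_decode b))"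
definition pd :: "nat set \<Rightarrow> nat set \<Rightarrow> (nat \<Rightarrow> real) \<Rightarrow> (nat \<Rightarrow> real) \<Rightarrow> nat \<Rightarrow> real" where
  "pd A B x z a = (if a \<in> pr A B then x (fst (prod_decode a)) * z (snd (prod_decode a)) else 0)"
definition emb0 :: "(nat \<Rightarrow> real) \<Rightarrow> nat \<Rightarrow> real" where
  "emb0 x a = (if even a then x (a div 2) else 0)"
definition emb1 :: "(nat \<Rightarrow> real) \<Rightarrow> nat \<Rightarrow> real" where
  "emb1 x a = (if odd a then x (a div 2) else 0)"

lemma finite_evI: "finite I \<Longrightarrow> finite I2 \<Longrightarrow> finite (evI I I2)"
  by (simp add: evI_def)
lemma ne_evI: "I \<noteq> {} \<Longrightarrow> evI I I2 \<noteq> {}"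
  by (simp add: evI_def)
lemma finite_pr: "finite A \<Longrightarrow> finite B \<Longrightarrow> finite (pr A B)"
  by (simp add: pr_def)
lemma ne_pr: "A \<noteq> {} \<Longrightarrow> B \<noteq> {} \<Longrightarrow> pr A B \<noteq> {}"
  by (simp add: pr_def)

lemma sum_evI:
  assumes "finite I" "finite I2"
  shows "(\<Sum>a\<in>evI I I2. h a) = (\<Sum>i\<in>I. h (2*i)) + (\<Sum>i\<in>I2. h (2*i+1))"
proof -
  have d: "(\<lambda>i::nat. 2*i) ` I \<inter> (\<lambda>i. 2*i+1) ` I2 = {}" by auto presburger
  have "(\<Sum>a\<in>evI I I2. h a) = (\<Sum>a\<in>(\<lambda>i. 2*i) ` I. h a) + (\<Sum>a\<in>(\<lambda>i. 2*i+1) ` I2. h a)"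
    unfolding evI_def by (rule sum.union_disjoint) (use assms d in auto)
  also have "\<dots> = (\<Sum>i\<in>I. h (2*i)) + (\<Sum>i\<in>I2. h (2*i+1))"
    by (simp add: sum.reindex inj_on_def)
  finally show ?thesis .
qed

lemma sum_pr:
  assumes "finite A" "finite B"
  shows "(\<Sum>a\<in>pr A B. h a) = (\<Sum>i\<in>A. \<Sum>j\<in>B. h (prod_encode (i, j)))"
proof -
  have "(\<Sum>a\<in>pr A B. h a) = (\<Sum>p\<in>A \<times> B. h (prod_encode p))"
    unfolding pr_def by (simp add: sum.reindex inj_prod_encode)
  also have "\<dots> = (\<Sum>i\<in>A. \<Sum>j\<in>B. h (prod_encode (i, j)))"
    by (subst sum.cartesian_product) (simp add: split_def)
  finally show ?thesis .
qed

lemma pr_mem: "i \<in> A \<Longrightarrow> j \<in> B \<Longrightarrow> prod_encode (i, j) \<in> pr A B"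
  by (simp add: pr_def)

lemma pr_E: "a \<in> pr A B \<Longrightarrow> (\<And>i j. i \<in> A \<Longrightarrow> j \<in> B \<Longrightarrow> a = prod_encode (i, j) \<Longrightarrow> P) \<Longrightarrow> P"
  by (auto simp: pr_def)

lemma pd_enc: "i \<in> A \<Longrightarrow> j \<in> B \<Longrightarrow> pd A B x z (prod_encode (i, j)) = x i * z j"
  by (simp add: pd_def pr_mem)

lemma pd_mixed:
  assumes "finite A" "finite B" "x \<in> mixed A" "z \<in> mixed B"
  shows "pd A B x z \<in> mixed (pr A B)"
proof -
  have "\<forall>a\<in>pr A B. 0 \<le> pd A B x z a"
    using assms by (auto elim!: pr_E simp: pd_enc mixed_nonneg)
  moreover have "\<forall>a. a \<notin> pr A B \<longrightarrow> pd A B x z a = 0" by (simp add: pd_def)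
  moreover have "(\<Sum>a\<in>pr A B. pd A B x z a) = 1"
  proof -
    have "(\<Sum>a\<in>pr A B. pd A B x z a) = (\<Sum>i\<in>A. \<Sum>j\<in>B. x i * z j)"
      unfolding sum_pr[OF assms(1,2)] by (intro sum.cong refl) (simp add: pd_enc)
    also have "\<dots> = (\<Sum>i\<in>A. x i) * (\<Sum>j\<in>B. z j)" by (simp add: sum_product)
    finally show ?thesis using assms mixed_sum by simp
  qed
  ultimately show ?thesis unfolding mixed_def by blast
qed

lemma emb0_mixed:
  assumes "finite I" "finite I2" "x \<in> mixed I"
  shows "emb0 x \<in> mixed (evI I I2)"
proof -
  have "\<forall>a\<in>evI I I2. 0 \<le> emb0 x a"
    using assms(3) by (auto simp: evI_def emb0_def mixed_nonneg)
  moreover have "\<forall>a. a \<notin> evI I I2 \<longrightarrow> emb0 x a = 0"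
  proof (intro allI impI)
    fix a assume a: "a \<notin> evI I I2"
    show "emb0 x a = 0"
    proof (cases "even a")
      case True
      then have "a = 2 * (a div 2)" by simp
      then have "a div 2 \<notin> I" using a unfolding evI_def by (metis UnI1 imageI)
      then show ?thesis using assms(3) True by (simp add: emb0_def mixed_out)
    qed (simp add: emb0_def)
  qed
  moreover have "(\<Sum>a\<in>evI I I2. emb0 x a) = 1"
    unfolding sum_evI[OF assms(1,2)] using mixed_sum[OF assms(3)] by (simp add: emb0_def)
  ultimately show ?thesis unfolding mixed_def by blast
qed

lemma emb1_mixed:
  assumes "finite I" "finite I2" "x \<in> mixed I2"
  shows "emb1 x \<in> mixed (evI I I2)"
proof -
  have "\<forall>a\<in>evI I I2. 0 \<le> emb1 x a"
    using assms(3) by (auto simp: evI_def emb1_def mixed_nonneg)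
  moreover have "\<forall>a. a \<notin> evI I I2 \<longrightarrow> emb1 x a = 0"
  proof (intro allI impI)
    fix a assume a: "a \<notin> evI I I2"
    show "emb1 x a = 0"
    proof (cases "odd a")
      case True
      then have "a = 2 * (a div 2) + 1" by simp
      then have "a div 2 \<notin> I2" using a unfolding evI_def by (metis UnI2 imageI)
      then show ?thesis using assms(3) True by (simp add: emb1_def mixed_out)
    qed (simp add: emb1_def)
  qed
  moreover have "(\<Sum>a\<in>evI I I2. emb1 x a) = 1"
    unfolding sum_evI[OF assms(1,2)] using mixed_sum[OF assms(3)] by (simp add: emb1_def)
  ultimately show ?thesis unfolding mixed_def by blast
qed

lemma sum_mixed_const:
  assumes "z \<in> mixed B"
  shows "(\<Sum>j\<in>B. z j * c) = (c::real)"
  using mixed_sum[OF assms] by (simp add: sum_distrib_right[symmetric])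

lemma scaled_SUP_le:
  fixes f :: "'a \<Rightarrow> real"
  assumes "A \<noteq> {}" "0 \<le> a" "\<And>x. x \<in> A \<Longrightarrow> a * f x \<le> W"
  shows "a * (SUP x\<in>A. f x) \<le> W"
proof (cases "a = 0")
  case True
  then show ?thesis using assms by fastforce
next
  case False
  then have a: "0 < a" using assms by simp
  have "(SUP x\<in>A. f x) \<le> W / a"
    by (rule cSUP_least[OF assms(1)]) (use assms(3) a in \<open>simp add: pos_le_divide_eq mult.commute\<close>)
  then show ?thesis using a by (simp add: pos_le_divide_eq mult.commute)
qed

lemma scaled_INF_ge:
  fixes f :: "'a \<Rightarrow> real"
  assumes "A \<noteq> {}" "0 \<le> a" "\<And>x. x \<in> A \<Longrightarrow> W \<le> a * f x"
  shows "W \<le> a * (INF x\<in>A. f x)"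
proof (cases "a = 0")
  case True
  then show ?thesis using assms by fastforce
next
  case False
  then have a: "0 < a" using assms by simp
  have "W / a \<le> (INF x\<in>A. f x)"
    by (rule cINF_greatest[OF assms(1)]) (use assms(3) a in \<open>simp add: pos_divide_le_eq mult.commute\<close>)
  then show ?thesis using a by (simp add: pos_divide_le_eq mult.commute)
qed

lemma Val_max:
  fixes M N :: "nat \<Rightarrow> nat \<Rightarrow> real"
  assumes I: "finite I" "I \<noteq> {}" and J: "finite J" "J \<noteq> {}"
    and I2: "finite I2" "I2 \<noteq> {}" and J2: "finite J2" "J2 \<noteq> {}"
    and BM: "\<And>i j. i \<in> I \<Longrightarrow> j \<in> J \<Longrightarrow> \<bar>M i j\<bar> \<le> B"
    and BN: "\<And>i j. i \<in> I2 \<Longrightarrow> j \<in> J2 \<Longrightarrow> \<bar>N i j\<bar> \<le> B"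
  shows "Val (evI I I2) (pr J J2) (maxM M N) = max (Val I J M) (Val I2 J2 N)"
proof -
  let ?I = "evI I I2" and ?J = "pr J J2" and ?M = "maxM M N"
  have I': "finite ?I" "?I \<noteq> {}" using I I2 by (auto simp: finite_evI ne_evI)
  have J': "finite ?J" "?J \<noteq> {}" using J J2 by (auto simp: finite_pr ne_pr)
  have BM': "\<bar>?M a b\<bar> \<le> B" if "a \<in> ?I" "b \<in> ?J" for a b
    using that BM BN by (auto simp: evI_def maxM_def elim!: pr_E)
  have V1: "Val ?I ?J ?M = (SUP x\<in>mixed ?I. rowv ?I ?J ?M x)" by (rule Val_rowv[OF J'])
  have V2: "Val ?I ?J ?M = (INF y\<in>mixed ?J. colv ?I ?J ?M y)" by (rule Val_colv[OF I' J' BM'])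
  have low1: "Val I J M \<le> Val ?I ?J ?M"
    unfolding Val_rowv[OF J]
  proof (rule cSUP_least[OF mixed_ne[OF I]])
    fix x assume x: "x \<in> mixed I"
    have "rowv I J M x \<le> rowv ?I ?J ?M (emb0 x)"
      unfolding rowv_def[of ?I] using J'
    proof (subst Min_ge_iff, simp_all, intro ballI)
      fix b assume "b \<in> pr J J2"
      then obtain j j2 where jj: "j \<in> J" "j2 \<in> J2" "b = prod_encode (j, j2)" by (auto elim: pr_E)
      have "(\<Sum>a\<in>?I. emb0 x a * ?M a b) = (\<Sum>i\<in>I. x i * M i j)"
        unfolding sum_evI[OF I(1) I2(1)] by (simp add: emb0_def maxM_def jj)
      moreover have "rowv I J M x \<le> (\<Sum>i\<in>I. x i * M i j)"
        unfolding rowv_def using J jj by simp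
      ultimately show "rowv I J M x \<le> (\<Sum>a\<in>?I. emb0 x a * ?M a b)" by simp
    qed
    also have "\<dots> \<le> Val ?I ?J ?M" unfolding V1
      by (rule cSUP_upper[OF emb0_mixed[OF I(1) I2(1) x] bdd_rowv[OF I' J']])
    finally show "rowv I J M x \<le> Val ?I ?J ?M" .
  qed
  have low2: "Val I2 J2 N \<le> Val ?I ?J ?M"
    unfolding Val_rowv[OF J2]
  proof (rule cSUP_least[OF mixed_ne[OF I2]])
    fix x assume x: "x \<in> mixed I2"
    have "rowv I2 J2 N x \<le> rowv ?I ?J ?M (emb1 x)"
      unfolding rowv_def[of ?I] using J'
    proof (subst Min_ge_iff, simp_all, intro ballI)
      fix b assume "b \<in> pr J J2"
      then obtain j j2 where jj: "j \<in> J" "j2 \<in> J2" "b = prod_encode (j, j2)" by (auto elim: pr_E)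
      have "(\<Sum>a\<in>?I. emb1 x a * ?M a b) = (\<Sum>i\<in>I2. x i * N i j2)"
        unfolding sum_evI[OF I(1) I2(1)] by (simp add: emb1_def maxM_def jj)
      moreover have "rowv I2 J2 N x \<le> (\<Sum>i\<in>I2. x i * N i j2)"
        unfolding rowv_def using J2 jj by simp
      ultimately show "rowv I2 J2 N x \<le> (\<Sum>a\<in>?I. emb1 x a * ?M a b)" by simp
    qed
    also have "\<dots> \<le> Val ?I ?J ?M" unfolding V1
      by (rule cSUP_upper[OF emb1_mixed[OF I(1) I2(1) x] bdd_rowv[OF I' J']])
    finally show "rowv I2 J2 N x \<le> Val ?I ?J ?M" .
  qed
  have upp: "Val ?I ?J ?M \<le> max (colv I J M y) (colv I2 J2 N z)"
    if y: "y \<in> mixed J" and z: "z \<in> mixed J2" for y z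
  proof -
    have "Val ?I ?J ?M \<le> colv ?I ?J ?M (pd J J2 y z)" unfolding V2
      by (rule cINF_lower[OF bdd_colv[OF I' J'] pd_mixed[OF J(1) J2(1) y z]])
    also have "\<dots> \<le> max (colv I J M y) (colv I2 J2 N z)"
      unfolding colv_def[of ?I] using I'
    proof (subst Max_le_iff, simp_all, intro ballI)
      fix a assume "a \<in> evI I I2"
      then consider (e) i where "i \<in> I" "a = 2*i" | (o) i where "i \<in> I2" "a = 2*i+1"
        unfolding evI_def by blast
      then show "(\<Sum>b\<in>?J. pd J J2 y z b * ?M a b) \<le> max (colv I J M y) (colv I2 J2 N z)"
      proof cases
        case e
        have "(\<Sum>b\<in>?J. pd J J2 y z b * ?M a b) = (\<Sum>j\<in>J. \<Sum>j2\<in>J2. z j2 * (y j * M i j))"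
          unfolding sum_pr[OF J(1) J2(1)] by (intro sum.cong refl) (simp add: pd_enc maxM_def e mult_ac)
        also have "\<dots> = (\<Sum>j\<in>J. y j * M i j)" by (simp add: sum_mixed_const[OF z])
        also have "\<dots> \<le> colv I J M y" unfolding colv_def using I e by simp
        finally show ?thesis by simp
      next
        case o
        have "(\<Sum>b\<in>?J. pd J J2 y z b * ?M a b) = (\<Sum>j2\<in>J2. \<Sum>j\<in>J. y j * (z j2 * N i j2))"
          unfolding sum_pr[OF J(1) J2(1)] by (subst sum.swap) (intro sum.cong refl, simp add: pd_enc maxM_def o mult_ac)
        also have "\<dots> = (\<Sum>j2\<in>J2. z j2 * N i j2)" by (simp add: sum_mixed_const[OF y])
        also have "\<dots> \<le> colv I2 J2 N z" unfolding colv_def using I2 o by simp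
        finally show ?thesis by simp
      qed
    qed
    finally show ?thesis .
  qed
  have "Val ?I ?J ?M \<le> max (Val I J M) (Val I2 J2 N)"
  proof (rule ccontr)
    assume "\<not> ?thesis"
    then have a: "Val I J M < Val ?I ?J ?M" "Val I2 J2 N < Val ?I ?J ?M" by auto
    have "(INF y\<in>mixed J. colv I J M y) < Val ?I ?J ?M"
      using a(1) Val_colv[where M=M and B=B, OF I J BM] by simp
    then obtain y where y: "y \<in> mixed J" "colv I J M y < Val ?I ?J ?M"
      using cINF_less_iff[OF mixed_ne[OF J] bdd_colv[OF I J]] by blast
    have "(INF y\<in>mixed J2. colv I2 J2 N y) < Val ?I ?J ?M"
      using a(2) Val_colv[where M=N and B=B, OF I2 J2 BN] by simp
    then obtain z where z: "z \<in> mixed J2" "colv I2 J2 N z < Val ?I ?J ?M"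
      using cINF_less_iff[OF mixed_ne[OF J2] bdd_colv[OF I2 J2]] by blast
    show False using upp[OF y(1) z(1)] y z by simp
  qed
  with low1 low2 show ?thesis by simp
qed


lemma Val_cvx:
  fixes M N :: "nat \<Rightarrow> nat \<Rightarrow> real"
  assumes I: "finite I" "I \<noteq> {}" and J: "finite J" "J \<noteq> {}"
    and I2: "finite I2" "I2 \<noteq> {}" and J2: "finite J2" "J2 \<noteq> {}"
    and BM: "\<And>i j. i \<in> I \<Longrightarrow> j \<in> J \<Longrightarrow> \<bar>M i j\<bar> \<le> B"
    and BN: "\<And>i j. i \<in> I2 \<Longrightarrow> j \<in> J2 \<Longrightarrow> \<bar>N i j\<bar> \<le> B"
    and lam: "0 \<le> lam" "lam \<le> 1"
  shows "Val (pr I I2) (pr J J2) (cvxM lam M N) = lam * Val I J M + (1 - lam) * Val I2 J2 N"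
proof -
  let ?I = "pr I I2" and ?J = "pr J J2" and ?M = "cvxM lam M N"
  have I': "finite ?I" "?I \<noteq> {}" using I I2 by (auto simp: finite_pr ne_pr)
  have J': "finite ?J" "?J \<noteq> {}" using J J2 by (auto simp: finite_pr ne_pr)
  have BM': "\<bar>?M a b\<bar> \<le> B" if ab: "a \<in> ?I" "b \<in> ?J" for a b
  proof -
    obtain i i2 where a: "i \<in> I" "i2 \<in> I2" "a = prod_encode (i, i2)" using ab(1) by (auto elim: pr_E)
    obtain j j2 where b: "j \<in> J" "j2 \<in> J2" "b = prod_encode (j, j2)" using ab(2) by (auto elim: pr_E)
    have "\<bar>?M a b\<bar> \<le> lam * \<bar>M i j\<bar> + (1 - lam) * \<bar>N i2 j2\<bar>"
      unfolding cvxM_def a b using lam by (simp add: abs_mult) (metis abs_triangle_ineq abs_mult abs_of_nonneg diff_ge_0_iff_ge)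
    also have "\<dots> \<le> lam * B + (1 - lam) * B"
      using BM[OF a(1) b(1)] BN[OF a(2) b(2)] lam by (intro add_mono mult_left_mono) auto
    finally show ?thesis by (simp add: algebra_simps)
  qed
  have V1: "Val ?I ?J ?M = (SUP x\<in>mixed ?I. rowv ?I ?J ?M x)" by (rule Val_rowv[OF J'])
  have V2: "Val ?I ?J ?M = (INF y\<in>mixed ?J. colv ?I ?J ?M y)" by (rule Val_colv[OF I' J' BM'])
  have low: "lam * rowv I J M x + (1 - lam) * rowv I2 J2 N x2 \<le> Val ?I ?J ?M"
    if x: "x \<in> mixed I" and x2: "x2 \<in> mixed I2" for x x2
  proof -
    have "lam * rowv I J M x + (1 - lam) * rowv I2 J2 N x2 \<le> rowv ?I ?J ?M (pd I I2 x x2)"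
      unfolding rowv_def[of ?I] using J'
    proof (subst Min_ge_iff, simp_all, intro ballI)
      fix b assume "b \<in> pr J J2"
      then obtain j j2 where jj: "j \<in> J" "j2 \<in> J2" "b = prod_encode (j, j2)" by (auto elim: pr_E)
      have "(\<Sum>a\<in>?I. pd I I2 x x2 a * ?M a b)
          = (\<Sum>i\<in>I. \<Sum>i2\<in>I2. x2 i2 * (lam * (x i * M i j)) + x i * ((1 - lam) * (x2 i2 * N i2 j2)))"
        unfolding sum_pr[OF I(1) I2(1)] by (intro sum.cong refl) (simp add: pd_enc cvxM_def jj algebra_simps)
      also have "\<dots> = lam * (\<Sum>i\<in>I. x i * M i j) + (1 - lam) * (\<Sum>i2\<in>I2. x2 i2 * N i2 j2)"
        by (simp add: sum.distrib sum_mixed_const[OF x2] sum_mixed_const[OF x] sum_distrib_left[symmetric]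
              flip: sum.swap[of _ I])
      finally have eq: "(\<Sum>a\<in>?I. pd I I2 x x2 a * ?M a b) =
        lam * (\<Sum>i\<in>I. x i * M i j) + (1 - lam) * (\<Sum>i2\<in>I2. x2 i2 * N i2 j2)" .
      have "rowv I J M x \<le> (\<Sum>i\<in>I. x i * M i j)" unfolding rowv_def using J jj by simp
      moreover have "rowv I2 J2 N x2 \<le> (\<Sum>i2\<in>I2. x2 i2 * N i2 j2)" unfolding rowv_def using J2 jj by simp
      ultimately show "lam * rowv I J M x + (1 - lam) * rowv I2 J2 N x2 \<le> (\<Sum>a\<in>?I. pd I I2 x x2 a * ?M a b)"
        unfolding eq using lam by (intro add_mono mult_left_mono) auto
    qed
    also have "\<dots> \<le> Val ?I ?J ?M" unfolding V1
      by (rule cSUP_upper[OF pd_mixed[OF I(1) I2(1) x x2] bdd_rowv[OF I' J']])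
    finally show ?thesis .
  qed
  have upp: "Val ?I ?J ?M \<le> lam * colv I J M y + (1 - lam) * colv I2 J2 N y2"
    if y: "y \<in> mixed J" and y2: "y2 \<in> mixed J2" for y y2
  proof -
    have "Val ?I ?J ?M \<le> colv ?I ?J ?M (pd J J2 y y2)" unfolding V2
      by (rule cINF_lower[OF bdd_colv[OF I' J'] pd_mixed[OF J(1) J2(1) y y2]])
    also have "\<dots> \<le> lam * colv I J M y + (1 - lam) * colv I2 J2 N y2"
      unfolding colv_def[of ?I] using I'
    proof (subst Max_le_iff, simp_all, intro ballI)
      fix a assume "a \<in> pr I I2"
      then obtain i i2 where ii: "i \<in> I" "i2 \<in> I2" "a = prod_encode (i, i2)" by (auto elim: pr_E)
      have "(\<Sum>b\<in>?J. pd J J2 y y2 b * ?M a b)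
          = (\<Sum>j\<in>J. \<Sum>j2\<in>J2. y2 j2 * (lam * (y j * M i j)) + y j * ((1 - lam) * (y2 j2 * N i2 j2)))"
        unfolding sum_pr[OF J(1) J2(1)] by (intro sum.cong refl) (simp add: pd_enc cvxM_def ii algebra_simps)
      also have "\<dots> = lam * (\<Sum>j\<in>J. y j * M i j) + (1 - lam) * (\<Sum>j2\<in>J2. y2 j2 * N i2 j2)"
        by (simp add: sum.distrib sum_mixed_const[OF y2] sum_mixed_const[OF y] sum_distrib_left[symmetric]
              flip: sum.swap[of _ J])
      finally have eq: "(\<Sum>b\<in>?J. pd J J2 y y2 b * ?M a b) =
        lam * (\<Sum>j\<in>J. y j * M i j) + (1 - lam) * (\<Sum>j2\<in>J2. y2 j2 * N i2 j2)" .
      have "(\<Sum>j\<in>J. y j * M i j) \<le> colv I J M y" unfolding colv_def using I ii by simp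
      moreover have "(\<Sum>j2\<in>J2. y2 j2 * N i2 j2) \<le> colv I2 J2 N y2" unfolding colv_def using I2 ii by simp
      ultimately show "(\<Sum>b\<in>?J. pd J J2 y y2 b * ?M a b) \<le> lam * colv I J M y + (1 - lam) * colv I2 J2 N y2"
        unfolding eq using lam by (intro add_mono mult_left_mono) auto
    qed
    finally show ?thesis .
  qed
  have L: "lam * Val I J M + (1 - lam) * Val I2 J2 N \<le> Val ?I ?J ?M"
  proof -
    have "(1 - lam) * Val I2 J2 N \<le> Val ?I ?J ?M - lam * Val I J M"
      unfolding Val_rowv[OF J2]
    proof (rule scaled_SUP_le[OF mixed_ne[OF I2]])
      show "0 \<le> 1 - lam" using lam by simp
      fix x2 assume x2: "x2 \<in> mixed I2"
      have "lam * Val I J M \<le> Val ?I ?J ?M - (1 - lam) * rowv I2 J2 N x2"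
        unfolding Val_rowv[OF J]
        by (rule scaled_SUP_le[OF mixed_ne[OF I] lam(1)]) (use low[OF _ x2] in force)
      then show "(1 - lam) * rowv I2 J2 N x2 \<le> Val ?I ?J ?M - lam * Val I J M" by simp
    qed
    then show ?thesis by simp
  qed
  have VM: "Val I J M = (INF y\<in>mixed J. colv I J M y)" by (rule Val_colv[OF I J BM])
  have VN: "Val I2 J2 N = (INF y\<in>mixed J2. colv I2 J2 N y)" by (rule Val_colv[OF I2 J2 BN])
  have U: "Val ?I ?J ?M \<le> lam * Val I J M + (1 - lam) * Val I2 J2 N"
  proof -
    have "Val ?I ?J ?M - lam * Val I J M \<le> (1 - lam) * Val I2 J2 N"
      unfolding VN
    proof (rule scaled_INF_ge[OF mixed_ne[OF J2]])
      show "0 \<le> 1 - lam" using lam by simp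
      fix y2 assume y2: "y2 \<in> mixed J2"
      have "Val ?I ?J ?M - (1 - lam) * colv I2 J2 N y2 \<le> lam * Val I J M"
        unfolding VM
        by (rule scaled_INF_ge[OF mixed_ne[OF J] lam(1)]) (use upp[OF _ y2] in force)
      then show "Val ?I ?J ?M - lam * Val I J M \<le> (1 - lam) * colv I2 J2 N y2" by simp
    qed
    then show ?thesis by simp
  qed
  from L U show ?thesis by simp
qed


lemma entry_bound:
  fixes G :: "'k::finite \<Rightarrow> nat \<Rightarrow> nat \<Rightarrow> real"
  assumes "p \<in> simplexK" "\<forall>k i j. \<bar>G k i j\<bar> \<le> 1"
  shows "\<bar>\<Sum>k\<in>UNIV. p $ k * G k i j\<bar> \<le> 1"
proof -
  have "\<bar>\<Sum>k\<in>UNIV. p $ k * G k i j\<bar> \<le> (\<Sum>k\<in>UNIV. \<bar>p $ k * G k i j\<bar>)" by (rule sum_abs)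
  also have "\<dots> \<le> (\<Sum>k\<in>UNIV. p $ k)"
  proof (rule sum_mono)
    fix k
    have "0 \<le> p $ k" using assms(1) by (simp add: simplexK_def)
    then show "\<bar>p $ k * G k i j\<bar> \<le> p $ k"
      using assms(2) by (simp add: abs_mult) (metis mult_left_mono mult.right_neutral)
  qed
  also have "\<dots> = 1" using assms(1) by (simp add: simplexK_def)
  finally show ?thesis .
qed

lemma D0E:
  assumes "f \<in> D0"
  obtains I J and G :: "'k::finite \<Rightarrow> nat \<Rightarrow> nat \<Rightarrow> real" where
    "finite I" "I \<noteq> {}" "finite J" "J \<noteq> {}" "\<forall>k i j. \<bar>G k i j\<bar> \<le> 1"
    "\<forall>p\<in>simplexK. f p = Val I J (\<lambda>i j. \<Sum>k\<in>UNIV. p $ k * G k i j)"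
  using assms unfolding D0_def by blast

lemma D0I:
  fixes G :: "'k::finite \<Rightarrow> nat \<Rightarrow> nat \<Rightarrow> real"
  assumes "finite I" "I \<noteq> {}" "finite J" "J \<noteq> {}" "\<forall>k i j. \<bar>G k i j\<bar> \<le> 1"
    "\<forall>p\<in>simplexK. f p = Val I J (\<lambda>i j. \<Sum>k\<in>UNIV. p $ k * G k i j)"
  shows "f \<in> D0"
  using assms unfolding D0_def by blast

lemma D0_neg:
  assumes "f \<in> D0"
  shows "(\<lambda>p. - f p) \<in> D0"
proof -
  obtain I J and G :: "'a \<Rightarrow> nat \<Rightarrow> nat \<Rightarrow> real" where G:
    "finite I" "I \<noteq> {}" "finite J" "J \<noteq> {}" "\<forall>k i j. \<bar>G k i j\<bar> \<le> 1"
    "\<forall>p\<in>simplexK. f p = Val I J (\<lambda>i j. \<Sum>k\<in>UNIV. p $ k * G k i j)"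
    using D0E[OF assms] by blast
  show ?thesis
  proof (rule D0I[where I=J and J=I and G="\<lambda>k j i. - G k i j"])
    show "\<forall>k j i. \<bar>- G k i j\<bar> \<le> 1" using G(5) by simp
    show "\<forall>p\<in>simplexK. - f p = Val J I (\<lambda>j i. \<Sum>k\<in>UNIV. p $ k * - G k i j)"
    proof
      fix p :: "real ^ 'a" assume p: "p \<in> simplexK"
      have "Val J I (\<lambda>j i. - (\<Sum>k\<in>UNIV. p $ k * G k i j)) = - Val I J (\<lambda>i j. \<Sum>k\<in>UNIV. p $ k * G k i j)"
        by (rule Val_neg[OF G(1-4)]) (rule entry_bound[OF p G(5)])
      then show "- f p = Val J I (\<lambda>j i. \<Sum>k\<in>UNIV. p $ k * - G k i j)"
        using G(6) p by (simp add: sum_negf)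
    qed
  qed (use G in auto)
qed

lemma D0_max:
  assumes "f \<in> D0" "g \<in> D0"
  shows "(\<lambda>p. max (f p) (g p)) \<in> D0"
proof -
  obtain I J and G :: "'a \<Rightarrow> nat \<Rightarrow> nat \<Rightarrow> real" where G:
    "finite I" "I \<noteq> {}" "finite J" "J \<noteq> {}" "\<forall>k i j. \<bar>G k i j\<bar> \<le> 1"
    "\<forall>p\<in>simplexK. f p = Val I J (\<lambda>i j. \<Sum>k\<in>UNIV. p $ k * G k i j)"
    using D0E[OF assms(1)] by blast
  obtain I2 J2 and G2 :: "'a \<Rightarrow> nat \<Rightarrow> nat \<Rightarrow> real" where G2:
    "finite I2" "I2 \<noteq> {}" "finite J2" "J2 \<noteq> {}" "\<forall>k i j. \<bar>G2 k i j\<bar> \<le> 1"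
    "\<forall>p\<in>simplexK. g p = Val I2 J2 (\<lambda>i j. \<Sum>k\<in>UNIV. p $ k * G2 k i j)"
    using D0E[OF assms(2)] by blast
  show ?thesis
  proof (rule D0I[where I="evI I I2" and J="pr J J2" and G="\<lambda>k. maxM (G k) (G2 k)"])
    show "finite (evI I I2)" "evI I I2 \<noteq> {}" "finite (pr J J2)" "pr J J2 \<noteq> {}"
      using G G2 by (auto simp: finite_evI ne_evI finite_pr ne_pr)
    show "\<forall>k i j. \<bar>maxM (G k) (G2 k) i j\<bar> \<le> 1" using G(5) G2(5) by (simp add: maxM_def)
    show "\<forall>p\<in>simplexK. max (f p) (g p) = Val (evI I I2) (pr J J2) (\<lambda>i j. \<Sum>k\<in>UNIV. p $ k * maxM (G k) (G2 k) i j)"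
    proof
      fix p :: "real ^ 'a" assume p: "p \<in> simplexK"
      have e: "(\<lambda>i j. \<Sum>k\<in>UNIV. p $ k * maxM (G k) (G2 k) i j) =
        maxM (\<lambda>i j. \<Sum>k\<in>UNIV. p $ k * G k i j) (\<lambda>i j. \<Sum>k\<in>UNIV. p $ k * G2 k i j)"
        by (intro ext) (simp add: maxM_def)
      show "max (f p) (g p) = Val (evI I I2) (pr J J2) (\<lambda>i j. \<Sum>k\<in>UNIV. p $ k * maxM (G k) (G2 k) i j)"
        unfolding e using G(6) G2(6) p
        by (simp add: Val_max[OF G(1-4) G2(1-4) entry_bound[OF p G(5)] entry_bound[OF p G2(5)]])
    qed
  qed
qed

lemma D0_cvx:
  assumes "f \<in> D0" "g \<in> D0" "0 \<le> lam" "lam \<le> 1"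
  shows "(\<lambda>p. lam * f p + (1 - lam) * g p) \<in> D0"
proof -
  obtain I J and G :: "'a \<Rightarrow> nat \<Rightarrow> nat \<Rightarrow> real" where G:
    "finite I" "I \<noteq> {}" "finite J" "J \<noteq> {}" "\<forall>k i j. \<bar>G k i j\<bar> \<le> 1"
    "\<forall>p\<in>simplexK. f p = Val I J (\<lambda>i j. \<Sum>k\<in>UNIV. p $ k * G k i j)"
    using D0E[OF assms(1)] by blast
  obtain I2 J2 and G2 :: "'a \<Rightarrow> nat \<Rightarrow> nat \<Rightarrow> real" where G2:
    "finite I2" "I2 \<noteq> {}" "finite J2" "J2 \<noteq> {}" "\<forall>k i j. \<bar>G2 k i j\<bar> \<le> 1"
    "\<forall>p\<in>simplexK. g p = Val I2 J2 (\<lambda>i j. \<Sum>k\<in>UNIV. p $ k * G2 k i j)"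
    using D0E[OF assms(2)] by blast
  show ?thesis
  proof (rule D0I[where I="pr I I2" and J="pr J J2" and G="\<lambda>k. cvxM lam (G k) (G2 k)"])
    show "finite (pr I I2)" "pr I I2 \<noteq> {}" "finite (pr J J2)" "pr J J2 \<noteq> {}"
      using G G2 by (auto simp: finite_pr ne_pr)
    show "\<forall>k i j. \<bar>cvxM lam (G k) (G2 k) i j\<bar> \<le> 1"
    proof (intro allI)
      fix k i j
      let ?a = "G k (fst (prod_decode i)) (fst (prod_decode j))"
      let ?b = "G2 k (snd (prod_decode i)) (snd (prod_decode j))"
      have "\<bar>lam * ?a + (1 - lam) * ?b\<bar> \<le> lam * \<bar>?a\<bar> + (1 - lam) * \<bar>?b\<bar>"
        using assms(3,4) by (metis abs_triangle_ineq abs_mult abs_of_nonneg diff_ge_0_iff_ge)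
      also have "\<dots> \<le> lam * 1 + (1 - lam) * 1"
        using G(5) G2(5) assms(3,4) by (intro add_mono mult_left_mono) auto
      finally show "\<bar>cvxM lam (G k) (G2 k) i j\<bar> \<le> 1" by (simp add: cvxM_def)
    qed
    show "\<forall>p\<in>simplexK. lam * f p + (1 - lam) * g p = Val (pr I I2) (pr J J2) (\<lambda>i j. \<Sum>k\<in>UNIV. p $ k * cvxM lam (G k) (G2 k) i j)"
    proof
      fix p :: "real ^ 'a" assume p: "p \<in> simplexK"
      have e: "(\<lambda>i j. \<Sum>k\<in>UNIV. p $ k * cvxM lam (G k) (G2 k) i j) =
        cvxM lam (\<lambda>i j. \<Sum>k\<in>UNIV. p $ k * G k i j) (\<lambda>i j. \<Sum>k\<in>UNIV. p $ k * G2 k i j)"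
      proof (intro ext)
        fix i j
        let ?a = "\<lambda>k. G k (fst (prod_decode i)) (fst (prod_decode j))"
        let ?b = "\<lambda>k. G2 k (snd (prod_decode i)) (snd (prod_decode j))"
        have "(\<Sum>k\<in>UNIV. p $ k * (lam * ?a k + (1 - lam) * ?b k))
            = (\<Sum>k\<in>UNIV. lam * (p $ k * ?a k) + (1 - lam) * (p $ k * ?b k))"
          by (rule sum.cong) (auto simp: algebra_simps)
        also have "\<dots> = lam * (\<Sum>k\<in>UNIV. p $ k * ?a k) + (1 - lam) * (\<Sum>k\<in>UNIV. p $ k * ?b k)"
          by (simp add: sum.distrib sum_distrib_left)
        finally show "(\<Sum>k\<in>UNIV. p $ k * cvxM lam (G k) (G2 k) i j) =
          cvxM lam (\<lambda>i j. \<Sum>k\<in>UNIV. p $ k * G k i j) (\<lambda>i j. \<Sum>k\<in>UNIV. p $ k * G2 k i j) i j"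
          by (simp add: cvxM_def)
      qed
      show "lam * f p + (1 - lam) * g p = Val (pr I I2) (pr J J2) (\<lambda>i j. \<Sum>k\<in>UNIV. p $ k * cvxM lam (G k) (G2 k) i j)"
        unfolding e using G(6) G2(6) p
        by (simp add: Val_cvx[OF G(1-4) G2(1-4) entry_bound[OF p G(5)] entry_bound[OF p G2(5)] assms(3,4)])
    qed
  qed
qed

lemma D0_min:
  assumes "f \<in> D0" "g \<in> D0"
  shows "(\<lambda>p. min (f p) (g p)) \<in> D0"
proof -
  have "(\<lambda>p. - max (- f p) (- g p)) \<in> D0"
    by (rule D0_neg, rule D0_max) (use D0_neg assms in auto)
  moreover have "(\<lambda>p. - max (- f p) (- g p)) = (\<lambda>p. min (f p) (g p))" by (intro ext) linarith
  ultimately show ?thesis by simp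
qed


lemma Val_single: "Val {0} {0} M = M 0 0"
proof -
  have "Val {0} {0} M = (SUP x\<in>mixed {0}. rowv {0} {0} M x)" by (rule Val_rowv) auto
  also have "\<dots> = (SUP x\<in>mixed {0}. M 0 0)"
  proof (rule SUP_cong[OF refl])
    fix x assume "x \<in> mixed {0}"
    then have "x 0 = 1" using mixed_sum by fastforce
    then show "rowv {0} {0} M x = M 0 0" by (simp add: rowv_def)
  qed
  also have "\<dots> = M 0 0" using mixed_ne[of "{0::nat}"] by simp
  finally show ?thesis .
qed

lemma D0_lin:
  fixes a :: "'k::finite \<Rightarrow> real"
  assumes "\<forall>k. \<bar>a k\<bar> \<le> 1"
  shows "(\<lambda>p::real^'k. \<Sum>k\<in>UNIV. p $ k * a k) \<in> D0"
  by (rule D0I[where I="{0}" and J="{0}" and G="\<lambda>k i j. a k"]) (use assms in \<open>auto simp: Val_single\<close>)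

lemma D0_zero: "(\<lambda>p::real^'k::finite. 0) \<in> D0"
  using D0_lin[where a="\<lambda>k::'k. 0"] by simp

lemma D0_scale:
  assumes "g \<in> D0" "0 \<le> s" "s \<le> 1"
  shows "(\<lambda>p. s * g p) \<in> D0"
  using D0_cvx[OF assms(1) D0_zero assms(2,3)] by simp

definition QQ :: "(real^'k::finite \<Rightarrow> real) \<Rightarrow> bool" where
  "QQ f \<longleftrightarrow> continuous_on simplexK f \<and> (\<exists>c>0. \<exists>g\<in>D0. \<forall>p\<in>simplexK. f p = c * g p)"

lemma QQI:
  assumes "continuous_on simplexK f" "0 < c" "g \<in> D0" "\<forall>p\<in>simplexK. f p = c * g p"
  shows "QQ f"
  unfolding QQ_def using assms by blast

lemma QQE:
  assumes "QQ f"
  obtains c g where "continuous_on simplexK f" "0 < c" "g \<in> D0" "\<forall>p\<in>simplexK. f p = c * g p"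
  using assms unfolding QQ_def by blast

lemma QQ_lin:
  fixes a :: "'k::finite \<Rightarrow> real"
  shows "QQ (\<lambda>p::real^'k. \<Sum>k\<in>UNIV. p $ k * a k)"
proof -
  have cont: "continuous_on simplexK (\<lambda>p::real^'k. \<Sum>k\<in>UNIV. p $ k * a k)"
    by (intro continuous_on_sum continuous_on_mult continuous_on_component continuous_on_id continuous_on_const)
  define c where "c = 1 + (\<Sum>k\<in>UNIV. \<bar>a k\<bar>)"
  have s0: "0 \<le> (\<Sum>k\<in>UNIV. \<bar>a k\<bar>)" by (rule sum_nonneg) simp
  then have c: "0 < c" unfolding c_def by linarith
  have ak: "\<bar>a k\<bar> \<le> c" for k
  proof -
    have "\<bar>a k\<bar> \<le> (\<Sum>k\<in>UNIV. \<bar>a k\<bar>)" using member_le_sum[of k UNIV "\<lambda>k. \<bar>a k\<bar>"] by simp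
    then show ?thesis unfolding c_def by linarith
  qed
  have akc: "\<forall>k. \<bar>a k / c\<bar> \<le> 1"
  proof
    fix k
    have "\<bar>a k\<bar> / c \<le> 1" using ak[of k] c by (simp add: pos_divide_le_eq)
    moreover have "\<bar>a k / c\<bar> = \<bar>a k\<bar> / c" using c by simp
    ultimately show "\<bar>a k / c\<bar> \<le> 1" by linarith
  qed
  have D: "(\<lambda>p::real^'k. \<Sum>k\<in>UNIV. p $ k * (a k / c)) \<in> D0"
    by (rule D0_lin[OF akc])
  have E: "\<forall>p\<in>simplexK. (\<Sum>k\<in>UNIV. p $ k * a k) = c * (\<Sum>k\<in>UNIV. p $ k * (a k / c))"
  proof
    fix p :: "real^'k"
    have "c * (\<Sum>k\<in>UNIV. p $ k * (a k / c)) = (\<Sum>k\<in>UNIV. c * (p $ k * (a k / c)))"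
      by (rule sum_distrib_left)
    also have "\<dots> = (\<Sum>k\<in>UNIV. p $ k * a k)" by (rule sum.cong) (use c in auto)
    finally show "(\<Sum>k\<in>UNIV. p $ k * a k) = c * (\<Sum>k\<in>UNIV. p $ k * (a k / c))" by simp
  qed
  show ?thesis by (rule QQI[OF cont c D E])
qed

lemma QQ_common:
  fixes g1 g2 :: "real^'k::finite \<Rightarrow> real"
  assumes "c1 > 0" "g1 \<in> D0" "c2 > 0" "g2 \<in> D0"
  obtains c h1 h2 where "c > 0" "h1 \<in> D0" "h2 \<in> D0" "\<And>p. c1 * g1 p = c * h1 p" "\<And>p. c2 * g2 p = c * h2 p"
proof -
  define c where "c = max c1 c2"
  have c: "0 < c" using assms unfolding c_def by simp
  have "(\<lambda>p. (c1 / c) * g1 p) \<in> D0" by (rule D0_scale[OF assms(2)]) (use assms c in \<open>auto simp: c_def\<close>)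
  moreover have "(\<lambda>p. (c2 / c) * g2 p) \<in> D0" by (rule D0_scale[OF assms(4)]) (use assms c in \<open>auto simp: c_def\<close>)
  moreover have "c1 * g1 p = c * ((c1 / c) * g1 p)" "c2 * g2 p = c * ((c2 / c) * g2 p)" for p
    using c by auto
  ultimately show ?thesis using that[of c "\<lambda>p. (c1 / c) * g1 p" "\<lambda>p. (c2 / c) * g2 p"] c by blast
qed

lemma QQ_max:
  assumes "QQ f1" "QQ f2"
  shows "QQ (\<lambda>p. max (f1 p) (f2 p))"
proof -
  obtain c1 g1 where g1: "c1 > 0" "g1 \<in> D0" "\<forall>p\<in>simplexK. f1 p = c1 * g1 p"
    using QQE[OF assms(1)] by metis
  obtain c2 g2 where g2: "c2 > 0" "g2 \<in> D0" "\<forall>p\<in>simplexK. f2 p = c2 * g2 p"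
    using QQE[OF assms(2)] by metis
  note g = g1 g2
  obtain c h1 h2 where h: "c > 0" "h1 \<in> D0" "h2 \<in> D0" "\<And>p. c1 * g1 p = c * h1 p" "\<And>p. c2 * g2 p = c * h2 p"
    using QQ_common[OF g(1,2,4,5)] by blast
  have D: "(\<lambda>p. max (h1 p) (h2 p)) \<in> D0" by (rule D0_max[OF h(2,3)])
  have E: "\<forall>p\<in>simplexK. max (f1 p) (f2 p) = c * max (h1 p) (h2 p)"
    using g h by (simp add: max_mult_distrib_left)
  have C: "continuous_on simplexK (\<lambda>p. max (f1 p) (f2 p))"
    using QQE[OF assms(1)] QQE[OF assms(2)] by (metis continuous_on_max)
  show ?thesis by (rule QQI[OF C h(1) D E])
qed

lemma QQ_min:
  assumes "QQ f1" "QQ f2"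
  shows "QQ (\<lambda>p. min (f1 p) (f2 p))"
proof -
  obtain c1 g1 where g1: "c1 > 0" "g1 \<in> D0" "\<forall>p\<in>simplexK. f1 p = c1 * g1 p"
    using QQE[OF assms(1)] by metis
  obtain c2 g2 where g2: "c2 > 0" "g2 \<in> D0" "\<forall>p\<in>simplexK. f2 p = c2 * g2 p"
    using QQE[OF assms(2)] by metis
  note g = g1 g2
  obtain c h1 h2 where h: "c > 0" "h1 \<in> D0" "h2 \<in> D0" "\<And>p. c1 * g1 p = c * h1 p" "\<And>p. c2 * g2 p = c * h2 p"
    using QQ_common[OF g(1,2,4,5)] by blast
  have D: "(\<lambda>p. min (h1 p) (h2 p)) \<in> D0" by (rule D0_min[OF h(2,3)])
  have E: "\<forall>p\<in>simplexK. min (f1 p) (f2 p) = c * min (h1 p) (h2 p)"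
    using g h by (simp add: min_mult_distrib_left)
  have C: "continuous_on simplexK (\<lambda>p. min (f1 p) (f2 p))"
    using QQE[OF assms(1)] QQE[OF assms(2)] by (metis continuous_on_min)
  show ?thesis by (rule QQI[OF C h(1) D E])
qed

lemma QQ_Max:
  assumes "finite S" "S \<noteq> {}" "\<forall>y\<in>S. QQ (F y)"
  shows "QQ (\<lambda>z. Max ((\<lambda>y. F y z) ` S))"
  using assms
proof (induction S rule: finite_ne_induct)
  case (singleton x)
  have "(\<lambda>z. Max ((\<lambda>y. F y z) ` {x})) = F x" by auto
  then show ?case using singleton by simp
next
  case (insert x S)
  have eq: "(\<lambda>z. Max ((\<lambda>y. F y z) ` insert x S)) = (\<lambda>z. max (F x z) (Max ((\<lambda>y. F y z) ` S)))"
    using insert by (intro ext) simp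
  have "QQ (\<lambda>z. max (F x z) (Max ((\<lambda>y. F y z) ` S)))"
    by (rule QQ_max) (use insert in auto)
  then show ?case unfolding eq .
qed

lemma QQ_Min:
  assumes "finite S" "S \<noteq> {}" "\<forall>y\<in>S. QQ (F y)"
  shows "QQ (\<lambda>z. Min ((\<lambda>y. F y z) ` S))"
  using assms
proof (induction S rule: finite_ne_induct)
  case (singleton x)
  have "(\<lambda>z. Min ((\<lambda>y. F y z) ` {x})) = F x" by auto
  then show ?case using singleton by simp
next
  case (insert x S)
  have eq: "(\<lambda>z. Min ((\<lambda>y. F y z) ` insert x S)) = (\<lambda>z. min (F x z) (Min ((\<lambda>y. F y z) ` S)))"
    using insert by (intro ext) simp
  have "QQ (\<lambda>z. min (F x z) (Min ((\<lambda>y. F y z) ` S)))"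
    by (rule QQ_min) (use insert in auto)
  then show ?case unfolding eq .
qed

lemma compact_simplexK: "compact (simplexK :: (real^'k::finite) set)"
proof -
  have eq: "(simplexK :: (real^'k) set) = {p. \<forall>k. 0 \<le> p $ k} \<inter> {p. (\<Sum>k\<in>UNIV. p $ k) = 1}"
    by (auto simp: simplexK_def)
  have "closed (simplexK :: (real^'k) set)" unfolding eq
    by (intro closed_Int closed_Collect_all closed_Collect_le closed_Collect_eq continuous_intros)
  moreover have "bounded (simplexK :: (real^'k) set)"
    unfolding bounded_iff
  proof (intro exI ballI)
    fix p :: "real^'k" assume p: "p \<in> simplexK"
    have "norm p \<le> (\<Sum>k\<in>UNIV. \<bar>p $ k\<bar>)" by (rule norm_le_l1_cart)
    also have "\<dots> = 1" using p by (simp add: simplexK_def)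
    finally show "norm p \<le> 1" .
  qed
  ultimately show ?thesis by (simp add: compact_eq_bounded_closed)
qed


lemma simplex_sum: "p \<in> simplexK \<Longrightarrow> (\<Sum>k\<in>UNIV. p $ k) = 1"
  by (simp add: simplexK_def)

lemma interp:
  fixes u :: "real^'k::finite \<Rightarrow> real"
  assumes x: "x \<in> simplexK" and y: "y \<in> simplexK"
  shows "\<exists>a. (\<Sum>k\<in>UNIV. x $ k * a k) = u x \<and> (\<Sum>k\<in>UNIV. y $ k * a k) = u y"
proof (cases "x = y")
  case True
  have "(\<Sum>k\<in>UNIV. x $ k * u x) = u x"
    using simplex_sum[OF x] by (simp add: sum_distrib_right[symmetric])
  then show ?thesis using True by (intro exI[of _ "\<lambda>_. u x"]) simp
next
  case False
  then obtain k0 where k0: "x $ k0 \<noteq> y $ k0" by (auto simp: vec_eq_iff)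
  define \<beta> where "\<beta> = (u x - u y) / (x $ k0 - y $ k0)"
  define \<alpha> where "\<alpha> = u x - \<beta> * x $ k0"
  define a where "a k = \<alpha> + (if k = k0 then \<beta> else 0)" for k
  have gen: "(\<Sum>k\<in>UNIV. z $ k * a k) = \<alpha> + \<beta> * z $ k0" if z: "z \<in> simplexK" for z :: "real^'k"
  proof -
    have "(\<Sum>k\<in>UNIV. z $ k * a k) = (\<Sum>k\<in>UNIV. z $ k * \<alpha>) + (\<Sum>k\<in>UNIV. (if k = k0 then z $ k * \<beta> else 0))"
      unfolding a_def sum.distrib[symmetric] by (rule sum.cong) (auto simp: algebra_simps)
    also have "\<dots> = \<alpha> + \<beta> * z $ k0"
      using simplex_sum[OF z] by (simp add: sum_distrib_right[symmetric])
    finally show ?thesis .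
  qed
  have "\<alpha> + \<beta> * x $ k0 = u x" unfolding \<alpha>_def by simp
  moreover have "\<alpha> + \<beta> * y $ k0 = u y"
  proof -
    have "\<beta> * (x $ k0 - y $ k0) = u x - u y" unfolding \<beta>_def using k0 by simp
    then show ?thesis unfolding \<alpha>_def by (simp add: algebra_simps)
  qed
  ultimately show ?thesis using gen[OF x] gen[OF y] by metis
qed

lemma density:
  fixes u :: "real^'k::finite \<Rightarrow> real"
  assumes u: "continuous_on simplexK u" and e: "0 < e"
  shows "\<exists>h\<in>lin_span (D0 :: (real ^ 'k \<Rightarrow> real) set). \<forall>p\<in>simplexK. \<bar>u p - h p\<bar> < e"
proof -
  let ?X = "simplexK :: (real^'k) set"
  have stepB: "\<exists>g. QQ g \<and> g x < u x + e \<and> (\<forall>z\<in>?X. u z - e < g z)" if x: "x \<in> ?X" for x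
  proof -
    have "\<forall>y\<in>?X. \<exists>a. (\<Sum>k\<in>UNIV. x $ k * a k) = u x \<and> (\<Sum>k\<in>UNIV. y $ k * a k) = u y"
      using interp[OF x] by blast
    then obtain A where A: "\<And>y. y \<in> ?X \<Longrightarrow> (\<Sum>k\<in>UNIV. x $ k * A y k) = u x \<and> (\<Sum>k\<in>UNIV. y $ k * A y k) = u y"
      by metis
    define h where "h y z = (\<Sum>k\<in>UNIV. z $ k * A y k)" for y z :: "real^'k"
    have hQ: "QQ (h y)" for y unfolding h_def by (rule QQ_lin)
    have "\<exists>d>0. \<forall>z\<in>?X. dist z y < d \<longrightarrow> u z - e < h y z" if y: "y \<in> ?X" for y
    proof -
      have "continuous_on ?X (\<lambda>z. h y z - u z)"
        using hQ[of y] u unfolding QQ_def by (intro continuous_on_diff) auto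
      then obtain d where d: "d > 0" "\<forall>z\<in>?X. dist z y < d \<longrightarrow> dist (h y z - u z) (h y y - u y) < e"
        using y e unfolding continuous_on_iff by blast
      have "h y y = u y" using A[OF y] unfolding h_def by simp
      then have "\<forall>z\<in>?X. dist z y < d \<longrightarrow> u z - e < h y z"
        using d(2) by (auto simp: dist_real_def)
      then show ?thesis using d(1) by blast
    qed
    then obtain D where D: "\<And>y. y \<in> ?X \<Longrightarrow> D y > 0 \<and> (\<forall>z\<in>?X. dist z y < D y \<longrightarrow> u z - e < h y z)"
      by metis
    have cov: "?X \<subseteq> (\<Union>y\<in>?X. ball y (D y))"
      using D by force
    obtain S where S: "S \<subseteq> ?X" "finite S" "?X \<subseteq> (\<Union>y\<in>S. ball y (D y))"
      using compactE_image[OF compact_simplexK _ cov] by blast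
    have Sne: "S \<noteq> {}" using S(3) x by auto
    define g where "g z = Max ((\<lambda>y. h y z) ` S)" for z
    have "QQ g" unfolding g_def by (rule QQ_Max[OF S(2) Sne]) (simp add: hQ)
    moreover have "g x < u x + e"
    proof -
      have "g x \<le> u x" unfolding g_def using S(1,2) Sne A unfolding h_def
        by (subst Max_le_iff) auto
      then show ?thesis using e by simp
    qed
    moreover have "\<forall>z\<in>?X. u z - e < g z"
    proof
      fix z assume z: "z \<in> ?X"
      then obtain y where y: "y \<in> S" "z \<in> ball y (D y)" using S(3) by blast
      then have "u z - e < h y z" using D[of y] S(1) z by (auto simp: dist_commute)
      also have "h y z \<le> g z" unfolding g_def using S(2) y(1) by simp
      finally show "u z - e < g z" .
    qed
    ultimately show ?thesis by blast
  qed
  then obtain gg where gg: "\<And>x. x \<in> ?X \<Longrightarrow> QQ (gg x) \<and> gg x x < u x + e \<and> (\<forall>z\<in>?X. u z - e < gg x z)"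
    by metis
  have "\<exists>d>0. \<forall>z\<in>?X. dist z x < d \<longrightarrow> gg x z < u z + e" if x: "x \<in> ?X" for x
  proof -
    have "continuous_on ?X (\<lambda>z. gg x z - u z)"
      using gg[OF x] u unfolding QQ_def by (intro continuous_on_diff) auto
    moreover have "0 < u x + e - gg x x" using gg[OF x] by simp
    ultimately obtain d where d: "d > 0"
      "\<forall>z\<in>?X. dist z x < d \<longrightarrow> dist (gg x z - u z) (gg x x - u x) < u x + e - gg x x"
      using x unfolding continuous_on_iff by blast
    have "\<forall>z\<in>?X. dist z x < d \<longrightarrow> gg x z < u z + e"
      using d(2) by (auto simp: dist_real_def abs_less_iff)
    then show ?thesis using d(1) by blast
  qed
  then obtain D where D: "\<And>x. x \<in> ?X \<Longrightarrow> D x > 0 \<and> (\<forall>z\<in>?X. dist z x < D x \<longrightarrow> gg x z < u z + e)"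
    by metis
  have cov: "?X \<subseteq> (\<Union>x\<in>?X. ball x (D x))"
    using D by force
  obtain S where S: "S \<subseteq> ?X" "finite S" "?X \<subseteq> (\<Union>x\<in>S. ball x (D x))"
    using compactE_image[OF compact_simplexK _ cov] by blast
  define k0 where "k0 = (undefined :: 'k)"
  define p0 :: "real^'k" where "p0 = (\<chi> k. if k = k0 then 1 else 0)"
  have "p0 \<in> ?X" unfolding p0_def simplexK_def by auto
  then have Sne: "S \<noteq> {}" using S(3) by auto
  define hf where "hf z = Min ((\<lambda>x. gg x z) ` S)" for z
  have "QQ hf" unfolding hf_def by (rule QQ_Min[OF S(2) Sne]) (use gg S(1) in blast)
  then obtain c g where cg: "c > 0" "g \<in> D0" "\<forall>p\<in>?X. hf p = c * g p" unfolding QQ_def by blast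
  have approx: "\<bar>u z - hf z\<bar> < e" if z: "z \<in> ?X" for z
  proof -
    obtain x where x: "x \<in> S" "z \<in> ball x (D x)" using S(3) z by blast
    have "hf z \<le> gg x z" unfolding hf_def using S(2) x(1) by simp
    also have "gg x z < u z + e" using D[of x] S(1) x z by (auto simp: dist_commute)
    finally have 1: "hf z < u z + e" .
    have 2: "u z - e < hf z" unfolding hf_def using S gg z Sne by (subst Min_gr_iff) auto
    from 1 2 show ?thesis by (simp add: abs_less_iff)
  qed
  have "(\<lambda>p. c * g p) \<in> lin_span D0"
    unfolding lin_span_def
    by (rule CollectI, rule exI[of _ 1], rule exI[of _ "\<lambda>_. c"], rule exI[of _ "\<lambda>_. g"]) (use cg in simp)
  moreover have "\<forall>p\<in>?X. \<bar>u p - c * g p\<bar> < e" using approx cg by simp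
  ultimately show ?thesis by (intro bexI[of _ "\<lambda>p. c * g p"]) simp_all
qed


theorem lemma2:
  fixes f g :: "real ^ 'k::finite \<Rightarrow> real" and lam :: real
  assumes "f \<in> D0" and "g \<in> D0" and "0 \<le> lam" and "lam \<le> 1"
  shows "(\<lambda>p. - f p) \<in> D0 \<and>
         (\<lambda>p. max (f p) (g p)) \<in> D0 \<and>
         (\<lambda>p. min (f p) (g p)) \<in> D0 \<and>
         (\<lambda>p. lam * f p + (1 - lam) * g p) \<in> D0 \<and>
         (\<forall>u::real ^ 'k \<Rightarrow> real. continuous_on simplexK u \<longrightarrow>
           (\<forall>e>0. \<exists>h\<in>lin_span (D0 :: (real ^ 'k \<Rightarrow> real) set).
                     \<forall>p\<in>simplexK. \<bar>u p - h p\<bar> < e))"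
proof (intro conjI allI impI)
  show "(\<lambda>p. - f p) \<in> D0" by (rule D0_neg[OF assms(1)])
  show "(\<lambda>p. max (f p) (g p)) \<in> D0" by (rule D0_max[OF assms(1,2)])
  show "(\<lambda>p. min (f p) (g p)) \<in> D0" by (rule D0_min[OF assms(1,2)])
  show "(\<lambda>p. lam * f p + (1 - lam) * g p) \<in> D0" by (rule D0_cvx[OF assms])
  fix u :: "real ^ 'k \<Rightarrow> real" and e :: real
  assume "continuous_on simplexK u" "0 < e"
  then show "\<exists>h\<in>lin_span (D0 :: (real ^ 'k \<Rightarrow> real) set). \<forall>p\<in>simplexK. \<bar>u p - h p\<bar> < e"
    by (rule density)
qed

end
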